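(* There is a constant $C>0$ depending only on $\lambda$ such that for all $n=0,1,2,\dots$ and all $x\in K$, $$|S_{n+1}(x)-S_n(x)|\le C\,a_n.$$
   Context: Fix $(\lambda_n)_{n\ge1}$ and $\lambda$ with $\frac14\le\lambda_n\le\lambda<\frac12$. Starting from $Q_0=[0,1]^2\subset\mathbb{C}$, inductively replace each square of generation $n-1$ by its $4$ axis-parallel corner subsquares of side ratio $\lambda_n$; generation $n$ consists of $4^n$ closed squares of side $s_n=\lambda_1\cdots\lambda_n$ ($s_0=1$), forming the family $\mathcal D_n$. $K=\bigcap_n\bigcup_{Q\in\mathcal D_n}Q$, $\mu$ is the Borel probability measure on $K$ giving mass $4^{-n}$ to each $Q\in\mathcal D_n$, and $a_n=1/(4^ns_n)$. Let $C(z)=1/z$. For $x\in K$ let $Q_n(x)$ be the square of $\mathcal D_n$ containing $x$, $T_n(x)=\int_{K\setminus Q_n(x)}C(x-y)\,d\mu(y)$, and $S_n(x)=\frac{1}{\mu(Q_n(x))}\int_{Q_n(x)}T_n\,d\mu$. *)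

theory Defs
  imports "HOL-Analysis.Analysis"
begin

text \<open>The scale sequence is lam :: nat => real, only lam k for k >= 1 is used.\<close>

definition side :: "(nat \<Rightarrow> real) \<Rightarrow> nat \<Rightarrow> real" where
  "side lam n = (\<Prod>k\<in>{1..n}. lam k)"

definition corners :: "complex set" where
  "corners = {0, 1, \<i>, 1 + \<i>}"

definition llcorner :: "(nat \<Rightarrow> real) \<Rightarrow> nat \<Rightarrow> (nat \<Rightarrow> complex) \<Rightarrow> complex" where
  "llcorner lam n d = (\<Sum>k\<in>{1..n}. complex_of_real (side lam (k - 1) * (1 - lam k)) * d k)"

definition square :: "complex \<Rightarrow> real \<Rightarrow> complex set" where
  "square c r = {z. Re c \<le> Re z \<and> Re z \<le> Re c + r \<and> Im c \<le> Im z \<and> Im z \<le> Im c + r}"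

definition Dgen :: "(nat \<Rightarrow> real) \<Rightarrow> nat \<Rightarrow> complex set set" where
  "Dgen lam n = {square (llcorner lam n d) (side lam n) | d. \<forall>k\<in>{1..n}. d k \<in> corners}"

definition Kset :: "(nat \<Rightarrow> real) \<Rightarrow> complex set" where
  "Kset lam = (\<Inter>n. \<Union>(Dgen lam n))"

definition acoef :: "(nat \<Rightarrow> real) \<Rightarrow> nat \<Rightarrow> real" where
  "acoef lam n = 1 / (4 ^ n * side lam n)"

definition cantor_measure :: "(nat \<Rightarrow> real) \<Rightarrow> complex measure \<Rightarrow> bool" where
  "cantor_measure lam M \<longleftrightarrow> sets M = sets borel \<and> emeasure M (space M) = 1 \<and>
     emeasure M (UNIV - Kset lam) = 0 \<and>
     (\<forall>n. \<forall>Q\<in>Dgen lam n. emeasure M Q = ennreal (1 / 4 ^ n))"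

definition Qn :: "(nat \<Rightarrow> real) \<Rightarrow> nat \<Rightarrow> complex \<Rightarrow> complex set" where
  "Qn lam n x = (THE Q. Q \<in> Dgen lam n \<and> x \<in> Q)"

definition Tn :: "(nat \<Rightarrow> real) \<Rightarrow> complex measure \<Rightarrow> nat \<Rightarrow> complex \<Rightarrow> complex" where
  "Tn lam M n x = set_lebesgue_integral M (Kset lam - Qn lam n x) (\<lambda>y. 1 / (x - y))"

definition Sn :: "(nat \<Rightarrow> real) \<Rightarrow> complex measure \<Rightarrow> nat \<Rightarrow> complex \<Rightarrow> complex" where
  "Sn lam M n x = set_lebesgue_integral M (Qn lam n x) (Tn lam M n)
                   / complex_of_real (measure M (Qn lam n x))"

end

theory Submission
  imports Defs
begin

locale cset =
  fixes lam :: "nat \<Rightarrow> real" and lam0 :: real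
  assumes lam_bd: "\<And>k. k \<ge> 1 \<Longrightarrow> 1/4 \<le> lam k \<and> lam k \<le> lam0"
    and lam0: "lam0 < 1/2"
begin

abbreviation "s \<equiv> side lam"

lemma lam_pos: "k \<ge> 1 \<Longrightarrow> lam k > 0" using lam_bd[of k] by linarith
lemma lam_le: "k \<ge> 1 \<Longrightarrow> lam k \<le> lam0" using lam_bd[of k] by linarith
lemma lam_lehalf: "k \<ge> 1 \<Longrightarrow> lam k < 1/2" using lam_le lam0 by fastforce
lemma lam0_ge: "1/4 \<le> lam0" using lam_bd[of 1] by linarith

lemma side_0[simp]: "s 0 = 1" by (simp add: side_def)
lemma side_Suc: "s (Suc n) = s n * lam (Suc n)"
  unfolding side_def by (simp add: prod.nat_ivl_Suc' mult.commute)

lemma side_pos: "s n > 0"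
  by (induction n) (auto simp: side_Suc lam_pos)

lemma side_decr: "m \<le> n \<Longrightarrow> s n \<le> s m"
proof (induction n rule: dec_induct)
  case (step n)
  have "s (Suc n) \<le> s n" using side_pos[of n] lam_lehalf[of "Suc n"]
    by (simp add: side_Suc mult_left_le)
  with step show ?case by linarith
qed simp

lemma side_geom: "m \<le> n \<Longrightarrow> s n \<le> lam0 ^ (n - m) * s m"
proof (induction n rule: dec_induct)
  case (step n)
  have "s (Suc n) = s n * lam (Suc n)" by (rule side_Suc)
  also have "\<dots> \<le> (lam0 ^ (n - m) * s m) * lam0"
    using step side_pos[of n] lam_le[of "Suc n"] lam_pos[of "Suc n"]
    by (intro mult_mono) auto
  also have "\<dots> = lam0 ^ (Suc n - m) * s m" using step(1)
    by (simp add: Suc_diff_le)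
  finally show ?case .
qed simp

definition A :: "nat \<Rightarrow> (nat \<Rightarrow> real) \<Rightarrow> real" where
  "A n b = (\<Sum>k\<in>{1..n}. s (k - 1) * (1 - lam k) * b k)"

lemma A_Suc: "A (Suc n) b = A n b + s n * (1 - lam (Suc n)) * b (Suc n)"
  unfolding A_def by (simp add: sum.nat_ivl_Suc')

lemma A_cong: "(\<And>k. 1 \<le> k \<Longrightarrow> k \<le> n \<Longrightarrow> b k = b' k) \<Longrightarrow> A n b = A n b'"
  unfolding A_def by (intro sum.cong) auto

lemma A_nest:
  assumes "m \<le> N" "\<forall>k\<in>{1..N}. b k \<in> {0,1}"
  shows "A m b \<le> A N b \<and> A N b + s N \<le> A m b + s m"
  using assms
proof (induction N rule: dec_induct)
  case (step n)
  have b: "b (Suc n) \<in> {0,1}" using step by auto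
  have l: "0 < lam (Suc n)" "lam (Suc n) < 1/2" using lam_pos lam_lehalf by auto
  have sp: "s n > 0" by (rule side_pos)
  have "A n b \<le> A (Suc n) b \<and> A (Suc n) b + s (Suc n) \<le> A n b + s n"
    using b l sp unfolding A_Suc side_Suc
    by (auto simp: algebra_simps)
  with step show ?case by auto
qed simp

lemma sep1:
  assumes b: "\<forall>k\<in>{1..N}. b k \<in> {0,1}" and b': "\<forall>k\<in>{1..N'}. b' k \<in> {0,1}"
    and j: "1 \<le> j" "j \<le> N" "j \<le> N'"
    and agree: "\<And>k. 1 \<le> k \<Longrightarrow> k < j \<Longrightarrow> b k = b' k" and diff: "b j \<noteq> b' j"
    and t: "A N b \<le> t" "t \<le> A N b + s N" and t': "A N' b' \<le> t'" "t' \<le> A N' b' + s N'"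
  shows "\<bar>t - t'\<bar> \<ge> s (j - 1) * (1 - 2 * lam j)"
proof -
  obtain i where i: "j = Suc i" using j by (cases j) auto
  have tj: "A j b \<le> t" "t \<le> A j b + s j" using A_nest[OF j(2) b] t by auto
  have tj': "A j b' \<le> t'" "t' \<le> A j b' + s j" using A_nest[OF j(3) b'] t' by auto
  have eq: "A i b = A i b'" using agree i by (intro A_cong) auto
  have bj: "b j \<in> {0,1}" "b' j \<in> {0,1}" using b b' j by auto
  have sj: "s j = s i * lam j" using i side_Suc by simp
  have Aj: "A j b = A i b + s i * (1 - lam j) * b j" "A j b' = A i b' + s i * (1 - lam j) * b' j"
    using i A_Suc by auto
  have ji: "j - 1 = i" using i by simp
  show ?thesis using tj tj' eq bj diff unfolding Aj sj ji
    by (auto simp: algebra_simps abs_if split: if_splits)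
qed

definition cv :: "nat \<Rightarrow> (nat \<Rightarrow> complex) \<Rightarrow> bool" where
  "cv N d \<longleftrightarrow> (\<forall>k\<in>{1..N}. d k \<in> corners)"

definition Sq :: "nat \<Rightarrow> (nat \<Rightarrow> complex) \<Rightarrow> complex set" where
  "Sq N d = square (llcorner lam N d) (s N)"

lemma corner_ReIm: "c \<in> corners \<Longrightarrow> Re c \<in> {0,1} \<and> Im c \<in> {0,1}"
  by (auto simp: corners_def)

lemma cv_mono: "cv N d \<Longrightarrow> m \<le> N \<Longrightarrow> cv m d"
  by (auto simp: cv_def)

lemma Re_llc: "Re (llcorner lam N d) = A N (\<lambda>k. Re (d k))"
  by (simp add: llcorner_def A_def Re_sum)
lemma Im_llc: "Im (llcorner lam N d) = A N (\<lambda>k. Im (d k))"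
  by (simp add: llcorner_def A_def Im_sum)

lemma Sq_iff: "z \<in> Sq N d \<longleftrightarrow>
   A N (\<lambda>k. Re (d k)) \<le> Re z \<and> Re z \<le> A N (\<lambda>k. Re (d k)) + s N \<and>
   A N (\<lambda>k. Im (d k)) \<le> Im z \<and> Im z \<le> A N (\<lambda>k. Im (d k)) + s N"
  by (simp add: Sq_def square_def Re_llc Im_llc)

lemma llc_cong: "(\<And>k. 1 \<le> k \<Longrightarrow> k \<le> N \<Longrightarrow> d k = e k) \<Longrightarrow> llcorner lam N d = llcorner lam N e"
  unfolding llcorner_def by (intro sum.cong) auto

lemma Sq_cong: "(\<And>k. 1 \<le> k \<Longrightarrow> k \<le> N \<Longrightarrow> d k = e k) \<Longrightarrow> Sq N d = Sq N e"
  unfolding Sq_def using llc_cong by metis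

lemma Sq_nest: assumes "m \<le> N" "cv N d" shows "Sq N d \<subseteq> Sq m d"
proof -
  have r: "\<forall>k\<in>{1..N}. Re (d k) \<in> {0,1}" and i: "\<forall>k\<in>{1..N}. Im (d k) \<in> {0,1}"
    using assms(2) corner_ReIm by (auto simp: cv_def)
  show ?thesis using A_nest[OF assms(1) r] A_nest[OF assms(1) i]
    by (auto simp: Sq_iff)
qed

lemma sep2:
  assumes d: "cv N d" and e: "cv N' e"
    and j: "1 \<le> j" "j \<le> N" "j \<le> N'"
    and agree: "\<And>k. 1 \<le> k \<Longrightarrow> k < j \<Longrightarrow> d k = e k" and diff: "d j \<noteq> e j"
    and z: "z \<in> Sq N d" and y: "y \<in> Sq N' e"
  shows "cmod (z - y) \<ge> s (j - 1) * (1 - 2 * lam j)"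
proof -
  have rd: "\<forall>k\<in>{1..N}. Re (d k) \<in> {0,1}" and id: "\<forall>k\<in>{1..N}. Im (d k) \<in> {0,1}"
    using d corner_ReIm by (auto simp: cv_def)
  have re: "\<forall>k\<in>{1..N'}. Re (e k) \<in> {0,1}" and ie: "\<forall>k\<in>{1..N'}. Im (e k) \<in> {0,1}"
    using e corner_ReIm by (auto simp: cv_def)
  have "Re (d j) \<noteq> Re (e j) \<or> Im (d j) \<noteq> Im (e j)" using diff complex_eq_iff by blast
  then show ?thesis
  proof
    assume "Re (d j) \<noteq> Re (e j)"
    then have "\<bar>Re z - Re y\<bar> \<ge> s (j - 1) * (1 - 2 * lam j)"
      using z y agree by (intro sep1[OF rd re j]) (auto simp: Sq_iff)
    then show ?thesis using abs_Re_le_cmod[of "z - y"] by simp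
  next
    assume "Im (d j) \<noteq> Im (e j)"
    then have "\<bar>Im z - Im y\<bar> \<ge> s (j - 1) * (1 - 2 * lam j)"
      using z y agree by (intro sep1[OF id ie j]) (auto simp: Sq_iff)
    then show ?thesis using abs_Im_le_cmod[of "z - y"] by simp
  qed
qed

lemma gap_pos: "j \<ge> 1 \<Longrightarrow> s (j - 1) * (1 - 2 * lam j) > 0"
  using side_pos lam_lehalf[of j] by simp

lemma gap_ge: "j \<ge> 1 \<Longrightarrow> s (j - 1) * (1 - 2 * lam j) \<ge> s (j - 1) * (1 - 2 * lam0)"
  using side_pos[of "j - 1"] lam_le[of j] by (intro mult_left_mono) auto

lemma first_diff:
  fixes N :: nat and d e :: "nat \<Rightarrow> 'a"
  assumes "\<not> (\<forall>k\<in>{1..N}. d k = e k)"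
  obtains j where "1 \<le> j" "j \<le> N" "d j \<noteq> e j" "\<And>k. 1 \<le> k \<Longrightarrow> k < j \<Longrightarrow> d k = e k"
proof -
  define P where "P k \<longleftrightarrow> 1 \<le> (k::nat) \<and> k \<le> N \<and> d k \<noteq> e k" for k
  have ex: "\<exists>k. P k" using assms by (auto simp: P_def)
  obtain j where "P j" and jmin: "\<And>k. k < j \<Longrightarrow> \<not> P k"
    using ex exists_least_iff[of P] by blast
  moreover have "\<And>k. 1 \<le> k \<Longrightarrow> k < j \<Longrightarrow> d k = e k"
    using jmin \<open>P j\<close> by (auto simp: P_def)
  ultimately show ?thesis using that by (auto simp: P_def)
qed

lemma Sq_unique:
  assumes "cv N d" "cv N e" "z \<in> Sq N d" "z \<in> Sq N e"
  shows "Sq N e = Sq N d"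
proof (cases "\<forall>k\<in>{1..N}. d k = e k")
  case True then show ?thesis by (intro Sq_cong) auto
next
  case False
  then obtain j where j: "1 \<le> j" "j \<le> N" "d j \<noteq> e j" "\<And>k. 1 \<le> k \<Longrightarrow> k < j \<Longrightarrow> d k = e k"
    using first_diff by blast
  have "cmod (z - z) \<ge> s (j - 1) * (1 - 2 * lam j)"
    using j assms by (intro sep2[of N d N e j]) auto
  with gap_pos[OF j(1)] show ?thesis by simp
qed

lemma Dgen_iff: "Q \<in> Dgen lam N \<longleftrightarrow> (\<exists>d. cv N d \<and> Q = Sq N d)"
  by (auto simp: Dgen_def cv_def Sq_def)

lemma Qn_eq: assumes "cv N d" "z \<in> Sq N d" shows "Qn lam N z = Sq N d"
  unfolding Qn_def
proof (rule the_equality)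
  show "Sq N d \<in> Dgen lam N \<and> z \<in> Sq N d" using assms Dgen_iff by auto
next
  fix Q assume "Q \<in> Dgen lam N \<and> z \<in> Q"
  then obtain e where "cv N e" "Q = Sq N e" "z \<in> Sq N e" using Dgen_iff by auto
  then show "Q = Sq N d" using Sq_unique assms by auto
qed

lemma K_mem: assumes "x \<in> Kset lam" obtains d where "cv N d" "x \<in> Sq N d"
  using assms Dgen_iff unfolding Kset_def by blast

lemma shell:
  assumes d: "cv N d" and y: "y \<in> Kset lam" and ny: "y \<notin> Sq N d"
  shows "\<exists>j. 1 \<le> j \<and> j \<le> N \<and> y \<in> Sq (j - 1) d \<and>
           (\<forall>w\<in>Sq j d. cmod (w - y) \<ge> s (j - 1) * (1 - 2 * lam j))"
proof -
  obtain e where e: "cv N e" "y \<in> Sq N e" using K_mem[OF y] by blast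
  have "\<not> (\<forall>k\<in>{1..N}. d k = e k)"
  proof
    assume "\<forall>k\<in>{1..N}. d k = e k"
    then have "Sq N d = Sq N e" by (intro Sq_cong) auto
    with e ny show False by simp
  qed
  then obtain j where j: "1 \<le> j" "j \<le> N" "d j \<noteq> e j" "\<And>k. 1 \<le> k \<Longrightarrow> k < j \<Longrightarrow> d k = e k"
    using first_diff by blast
  have "Sq N e \<subseteq> Sq (j - 1) e" using j e by (intro Sq_nest) auto
  then have "y \<in> Sq (j - 1) e" using e by auto
  moreover have "Sq (j - 1) e = Sq (j - 1) d" using j by (intro Sq_cong) auto
  moreover have "\<forall>w\<in>Sq j d. cmod (w - y) \<ge> s (j - 1) * (1 - 2 * lam j)"
    using j e d by (intro ballI sep2[of j d N e j]) (auto intro: cv_mono)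
  ultimately show ?thesis using j by auto
qed

lemma Sq_closed: "closed (Sq N d)"
proof -
  have "Sq N d = {z. Re (llcorner lam N d) \<le> Re z} \<inter> {z. Re z \<le> Re (llcorner lam N d) + s N}
     \<inter> {z. Im (llcorner lam N d) \<le> Im z} \<inter> {z. Im z \<le> Im (llcorner lam N d) + s N}"
    by (auto simp: Sq_def square_def)
  then show ?thesis
    by (simp add: closed_Int closed_halfspace_Re_ge closed_halfspace_Re_le
        closed_halfspace_Im_ge closed_halfspace_Im_le)
qed

lemma Dgen_finite: "finite (Dgen lam N)"
proof -
  have "Dgen lam N \<subseteq> (\<lambda>d. Sq N d) ` (Pi\<^sub>E {1..N} (\<lambda>_. corners))"
  proof
    fix Q assume "Q \<in> Dgen lam N"
    then obtain d where d: "cv N d" "Q = Sq N d" using Dgen_iff by auto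
    have "Q = Sq N (restrict d {1..N})" using d Sq_cong[of N d "restrict d {1..N}"] by simp
    moreover have "restrict d {1..N} \<in> Pi\<^sub>E {1..N} (\<lambda>_. corners)" using d by (auto simp: cv_def)
    ultimately show "Q \<in> (\<lambda>d. Sq N d) ` (Pi\<^sub>E {1..N} (\<lambda>_. corners))" by blast
  qed
  moreover have "finite (Pi\<^sub>E {1..N} (\<lambda>_. corners))"
    by (intro finite_PiE) (auto simp: corners_def)
  ultimately show ?thesis by (meson finite_imageI finite_subset)
qed

lemma K_closed: "closed (Kset lam)"
  unfolding Kset_def
  by (intro closed_INT ballI closed_Union Dgen_finite) (auto simp: Dgen_iff Sq_closed)


end

locale cmeas = cset +
  fixes M :: "complex measure"
  assumes cm: "cantor_measure lam M"
begin

lemma sets_M[measurable_cong]: "sets M = sets borel" using cm by (simp add: cantor_measure_def)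
lemma space_M[simp]: "space M = UNIV" using sets_eq_imp_space_eq[OF sets_M] by simp

lemma fin: "finite_measure M"
  using cm by (intro finite_measureI) (simp add: cantor_measure_def)

sublocale finite_measure M by (rule fin)

lemma Sq_sets[measurable]: "Sq N d \<in> sets M"
  using Sq_closed sets_M by simp
lemma K_sets[measurable]: "Kset lam \<in> sets M"
  using K_closed sets_M by simp

lemma meas_Sq: assumes "cv N d" shows "measure M (Sq N d) = 1 / 4 ^ N"
proof -
  have "Sq N d \<in> Dgen lam N" using assms Dgen_iff by auto
  then have "emeasure M (Sq N d) = ennreal (1 / 4 ^ N)" using cm by (simp add: cantor_measure_def)
  then show ?thesis by (simp add: measure_def)
qed

lemma f_meas: "(\<lambda>y. indicator E y *\<^sub>R (1 / (w - y)) :: complex) \<in> borel_measurable M"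
  if "E \<in> sets M" for E w
  using that by measurable

lemma g_meas: "(\<lambda>z. \<integral>y. indicator E y *\<^sub>R (1 / (z - y)) \<partial>M :: complex) \<in> borel_measurable M"
  if "E \<in> sets M" for E
proof -
  have "(\<lambda>(z, y). indicator E y *\<^sub>R (1 / (z - y)) :: complex) \<in> borel_measurable (M \<Otimes>\<^sub>M M)"
    using that by measurable
  then show ?thesis by (rule borel_measurable_lebesgue_integral)
qed

end

locale pt = cmeas +
  fixes x :: complex and n :: nat and d :: "nat \<Rightarrow> complex"
  assumes xK: "x \<in> Kset lam" and dcv: "cv (Suc n) d" and xd: "x \<in> Sq (Suc n) d"
begin

definition f :: "nat \<Rightarrow> complex \<Rightarrow> complex \<Rightarrow> complex" where
  "f N w y = indicator (Kset lam - Sq N d) y *\<^sub>R (1 / (w - y))"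

definition dl :: "nat \<Rightarrow> real" where "dl m = s m * (1 - 2 * lam0)"

definition h :: "complex \<Rightarrow> real" where
  "h y = indicator (Sq n d) y / dl n + (\<Sum>m<n. indicator (Sq m d) y * (2 * s n / dl m ^ 2))"

lemma dl_pos: "dl m > 0" using side_pos lam0 by (simp add: dl_def)

lemma cvN: "N \<le> Suc n \<Longrightarrow> cv N d" using dcv cv_mono by blast

lemma SqN: "m \<le> N \<Longrightarrow> N \<le> Suc n \<Longrightarrow> Sq N d \<subseteq> Sq m d"
  using Sq_nest cvN by blast

lemma xm: "m \<le> Suc n \<Longrightarrow> x \<in> Sq m d" using SqN[of m "Suc n"] xd by auto

lemma h_nonneg: "h y \<ge> 0"
proof -
  have a: "\<And>m. 0 \<le> 2 * s n / dl m ^2" using dl_pos side_pos[of n] by (simp add: less_imp_le)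
  have b: "0 \<le> indicator (Sq n d) y / dl n" using dl_pos[of n] by simp
  show ?thesis unfolding h_def using a b by (intro add_nonneg_nonneg sum_nonneg mult_nonneg_nonneg) (auto simp del: times_divide_eq_right)
qed

lemma diam: assumes "a \<in> Sq m d" "b \<in> Sq m d" shows "cmod (a - b) \<le> 2 * s m"
proof -
  have "\<bar>Re (a - b)\<bar> \<le> s m" "\<bar>Im (a - b)\<bar> \<le> s m" using assms by (auto simp: Sq_iff)
  then show ?thesis using cmod_le[of "a - b"] by linarith
qed

lemma inv_bound: assumes "cmod (w - y) \<ge> r" "r > 0" shows "cmod (1 / (w - y)) \<le> 1 / r"
  using assms by (simp add: norm_divide frac_le)

lemma f_bound:
  assumes N: "N \<le> Suc n" and w: "w \<in> Sq N d"
  shows "cmod (f N w y) \<le> 1 / dl N"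
proof (cases "y \<in> Kset lam - Sq N d")
  case False then show ?thesis using dl_pos[of N] by (simp add: f_def)
next
  case True
  then obtain j where j: "1 \<le> j" "j \<le> N" "\<forall>w\<in>Sq j d. cmod (w - y) \<ge> s (j - 1) * (1 - 2 * lam j)"
    using shell[OF cvN[OF N], of y] by auto
  have "w \<in> Sq j d" using SqN[OF j(2) N] w by auto
  then have "cmod (w - y) \<ge> s (j - 1) * (1 - 2 * lam j)" using j by auto
  moreover have "s (j - 1) * (1 - 2 * lam j) \<ge> dl N"
  proof -
    have "s N * (1 - 2 * lam0) \<le> s (j - 1) * (1 - 2 * lam0)"
      using side_decr[of "j - 1" N] j lam0 by (intro mult_right_mono) auto
    then show ?thesis using gap_ge[OF j(1)] unfolding dl_def by linarith
  qed
  ultimately have "cmod (w - y) \<ge> dl N" by linarith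
  then have "cmod (1 / (w - y)) \<le> 1 / dl N" using dl_pos by (intro inv_bound)
  then show ?thesis using True by (simp add: f_def)
qed

lemma f_integrable:
  assumes N: "N \<le> Suc n" and w: "w \<in> Sq N d"
  shows "integrable M (f N w)"
  unfolding f_def
  by (rule integrable_const_bound[where B="1 / dl N"])
     (use f_bound[OF N w] in \<open>auto simp: f_def intro: f_meas\<close>)

lemma h_term: assumes "m < n" "y \<in> Sq m d" shows "2 * s n / dl m ^ 2 \<le> h y"
proof -
  have a: "\<And>m. 0 \<le> 2 * s n / dl m ^2" using dl_pos side_pos[of n] by (simp add: less_imp_le)
  have "2 * s n / dl m ^ 2 = indicator (Sq m d) y * (2 * s n / dl m ^ 2)" using assms by simp
  also have "\<dots> \<le> (\<Sum>m<n. indicator (Sq m d) y * (2 * s n / dl m ^ 2))"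
    using assms a by (intro member_le_sum) (auto simp del: times_divide_eq_right)
  also have "\<dots> \<le> h y" unfolding h_def using dl_pos[of n] by simp
  finally show ?thesis .
qed

lemma h_first: assumes "y \<in> Sq n d" shows "1 / dl n \<le> h y"
proof -
  have a: "\<And>m. 0 \<le> 2 * s n / dl m ^2" using dl_pos side_pos[of n] by (simp add: less_imp_le)
  have "0 \<le> (\<Sum>m<n. indicator (Sq m d) y * (2 * s n / dl m ^ 2))"
    using a by (intro sum_nonneg mult_nonneg_nonneg) (auto simp del: times_divide_eq_right)
  then show ?thesis using assms unfolding h_def by simp
qed

lemma pointwise:
  assumes N: "N = n \<or> N = Suc n" and w: "w \<in> Sq N d"
  shows "cmod (f N w y - f n x y) \<le> h y"
proof -
  have Nle: "n \<le> N" "N \<le> Suc n" using N by auto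
  have sub: "Sq N d \<subseteq> Sq n d" using SqN[OF Nle] .
  consider "y \<notin> Kset lam" | "y \<in> Kset lam" "y \<in> Sq N d"
    | "y \<in> Kset lam" "y \<notin> Sq N d" "y \<in> Sq n d" | "y \<in> Kset lam" "y \<notin> Sq n d"
    by blast
  then show ?thesis
  proof cases
    case 1 then show ?thesis using h_nonneg by (simp add: f_def)
  next
    case 2 then show ?thesis using h_nonneg sub by (auto simp: f_def)
  next
    case 3
    obtain j where j: "1 \<le> j" "j \<le> N" "\<forall>w\<in>Sq j d. cmod (w - y) \<ge> s (j - 1) * (1 - 2 * lam j)"
      using shell[OF cvN[OF Nle(2)] 3(1,2)] by auto
    have jN: "j = N"
    proof (rule ccontr)
      assume "j \<noteq> N"
      then have "j \<le> n" using j Nle by auto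
      then have "y \<in> Sq j d" using SqN[of j n] 3 by auto
      then have "cmod (y - y) \<ge> s (j - 1) * (1 - 2 * lam j)" using j by auto
      with gap_pos[OF j(1)] show False by simp
    qed
    then have NS: "N = Suc n" using 3 N by auto
    have "cmod (w - y) \<ge> s (j - 1) * (1 - 2 * lam j)" using j w jN by auto
    moreover have "s (j - 1) * (1 - 2 * lam j) \<ge> dl n" using gap_ge[OF j(1)] jN NS by (simp add: dl_def)
    ultimately have "cmod (w - y) \<ge> dl n" by linarith
    then have "cmod (1 / (w - y)) \<le> 1 / dl n" using dl_pos by (intro inv_bound)
    moreover have "f N w y - f n x y = 1 / (w - y)" using 3 by (simp add: f_def)
    ultimately show ?thesis using h_first[OF 3(3)] by simp
  next
    case 4
    obtain j where j: "1 \<le> j" "j \<le> n" "y \<in> Sq (j - 1) d"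
        "\<forall>w\<in>Sq j d. cmod (w - y) \<ge> s (j - 1) * (1 - 2 * lam j)"
      using shell[OF cvN[of n] 4] by auto
    have sj: "Sq n d \<subseteq> Sq j d" using SqN[of j n] j by auto
    have wj: "w \<in> Sq j d" "x \<in> Sq j d" using w sub sj xm[of n] by auto
    have g: "s (j - 1) * (1 - 2 * lam j) \<ge> dl (j - 1)" using gap_ge[OF j(1)] by (simp add: dl_def)
    have dw: "cmod (w - y) \<ge> dl (j - 1)" and dx: "cmod (x - y) \<ge> dl (j - 1)"
      using j(4) wj g by (meson order_trans)+
    have pos: "dl (j - 1) > 0" by (rule dl_pos)
    have wy: "w - y \<noteq> 0" and xy: "x - y \<noteq> 0" using dw dx pos by auto
    have "y \<notin> Sq N d" using 4 sub by auto
    then have "f N w y - f n x y = 1 / (w - y) - 1 / (x - y)" using 4 by (simp add: f_def)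
    also have "\<dots> = (x - w) / ((w - y) * (x - y))" using wy xy by (simp add: field_simps)
    finally have eq: "cmod (f N w y - f n x y) = cmod (x - w) / (cmod (w - y) * cmod (x - y))"
      by (simp add: norm_divide norm_mult)
    have xw: "cmod (x - w) \<le> 2 * s n" using diam[of x n w] xm[of n] w sub by auto
    have "dl (j - 1) ^ 2 \<le> cmod (w - y) * cmod (x - y)"
      unfolding power2_eq_square using dw dx pos by (intro mult_mono) auto
    then have "cmod (x - w) / (cmod (w - y) * cmod (x - y)) \<le> 2 * s n / dl (j - 1) ^ 2"
      using xw pos side_pos[of n] by (intro frac_le) auto
    also have "\<dots> \<le> h y" using j by (intro h_term) auto
    finally show ?thesis using eq by simp
  qed
qed

definition q :: real where "q = 4 * lam0 ^ 2"

lemma q_bounds: "0 < q" "q < 1"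
proof -
  have l: "1/4 \<le> lam0" "lam0 < 1/2" using lam0_ge lam0 by auto
  then show "0 < q" by (simp add: q_def)
  have "lam0 * lam0 < (1/2) * (1/2)" using l by (intro mult_strict_mono) auto
  then show "q < 1" by (simp add: q_def power2_eq_square)
qed

definition B0 :: real where
  "B0 = 1 / (1 - 2 * lam0) + 2 / ((1 - 2 * lam0) ^ 2 * (1 - q))"

lemma h_integrable: "integrable M h"
  unfolding h_def by (intro Bochner_Integration.integrable_add Bochner_Integration.integrable_sum integrable_mult_left integrable_divide_zero integrable_real_indicator) (auto simp: less_top[symmetric])

lemma int_h: "integral\<^sup>L M h = (1 / 4 ^ n) / dl n + (\<Sum>m<n. (1 / 4 ^ m) * (2 * s n / dl m ^ 2))"
proof -
  have "integral\<^sup>L M h = integral\<^sup>L M (\<lambda>y. indicator (Sq n d) y / dl n)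
      + integral\<^sup>L M (\<lambda>y. \<Sum>m<n. indicator (Sq m d) y * (2 * s n / dl m ^ 2))"
    unfolding h_def by (intro Bochner_Integration.integral_add Bochner_Integration.integrable_sum integrable_mult_left integrable_divide_zero integrable_real_indicator) (auto simp: less_top[symmetric])
  also have "integral\<^sup>L M (\<lambda>y. \<Sum>m<n. indicator (Sq m d) y * (2 * s n / dl m ^ 2))
     = (\<Sum>m<n. integral\<^sup>L M (\<lambda>y. indicator (Sq m d) y * (2 * s n / dl m ^ 2)))"
    by (intro Bochner_Integration.integral_sum integrable_mult_left integrable_real_indicator) (auto simp: less_top[symmetric])
  also have "\<dots> = (\<Sum>m<n. (1 / 4 ^ m) * (2 * s n / dl m ^ 2))"
    using meas_Sq cvN by (intro sum.cong) auto
  also have "integral\<^sup>L M (\<lambda>y. indicator (Sq n d) y / dl n) = (1 / 4 ^ n) / dl n"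
    using meas_Sq cvN[of n] by simp
  finally show ?thesis .
qed

lemma geo_sum: "(\<Sum>m<N. q ^ (N - m)) \<le> q / (1 - q)"
proof (induction N)
  case 0 then show ?case using q_bounds by simp
next
  case (Suc N)
  have "(\<Sum>m<Suc N. q ^ (Suc N - m)) = (\<Sum>m<N. q ^ (Suc N - m)) + q" by simp
  also have "(\<Sum>m<N. q ^ (Suc N - m)) = q * (\<Sum>m<N. q ^ (N - m))"
    unfolding sum_distrib_left by (intro sum.cong) (auto simp: Suc_diff_le)
  also have "q * (\<Sum>m<N. q ^ (N - m)) + q \<le> q * (q / (1 - q)) + q"
    using Suc q_bounds by (intro add_right_mono mult_left_mono) auto
  also have "\<dots> = q / (1 - q)" using q_bounds by (simp add: field_simps)
  finally show ?case .
qed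

lemma term_bound:
  assumes "m < n"
  shows "(1 / 4 ^ m) * (2 * s n / dl m ^ 2) \<le> 2 / (1 - 2 * lam0) ^ 2 * acoef lam n * q ^ (n - m)"
proof -
  define k where "k = n - m"
  have nk: "n = m + k" using assms k_def by simp
  have sm: "s m > 0" and sn: "s n > 0" using side_pos by auto
  have e: "1 - 2 * lam0 > 0" using lam0 by simp
  have l0: "lam0 > 0" using lam0_ge by simp
  have sg: "s n \<le> lam0 ^ k * s m" using side_geom[of m n] nk by simp
  have sq: "s n * s n \<le> (lam0 ^ k * s m) * (lam0 ^ k * s m)"
    using sg sn by (intro mult_mono) auto
  have "s n * (4 ^ m * s m ^ 2) * (1 - 2 * lam0) ^ 2 * 4 ^ n * s n
       = (1 - 2*lam0)^2 * 4^m * 4^m * (4 ^ k * (s n * s n)) * s m ^ 2"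
    by (simp add: nk power_add algebra_simps)
  have goal: "2 * s n / (4 ^ m * (s m ^ 2 * (1 - 2 * lam0) ^ 2))
      \<le> 2 * q ^ k / ((1 - 2 * lam0) ^ 2 * (4 ^ n * s n))"
  proof -
    have "4 ^ n * (s n * s n) \<le> 4 ^ n * ((lam0 ^ k * s m) * (lam0 ^ k * s m))"
      using sq by simp
    also have "\<dots> = q ^ k * 4 ^ m * s m ^ 2"
      by (simp add: nk q_def power_add power_mult_distrib power2_eq_square algebra_simps
          flip: power_mult)
    finally have *: "4 ^ n * (s n * s n) \<le> q ^ k * 4 ^ m * s m ^ 2" .
    show ?thesis using * sm sn e
      by (simp add: divide_simps) (simp add: algebra_simps power2_eq_square)
  qed
  have dm: "dl m ^ 2 = s m ^ 2 * (1 - 2 * lam0) ^ 2" by (simp add: dl_def power_mult_distrib)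
  show ?thesis unfolding dm using goal by (simp add: acoef_def k_def)
qed

lemma int_h_bound: "integral\<^sup>L M h \<le> B0 * acoef lam n"
proof -
  have e: "1 - 2 * lam0 > 0" using lam0 by simp
  have an: "acoef lam n > 0" using side_pos[of n] by (simp add: acoef_def)
  have t1: "(1 / 4 ^ n) / dl n = acoef lam n / (1 - 2 * lam0)"
    by (simp add: acoef_def dl_def)
  have "(\<Sum>m<n. (1 / 4 ^ m) * (2 * s n / dl m ^ 2))
     \<le> (\<Sum>m<n. 2 / (1 - 2 * lam0) ^ 2 * acoef lam n * q ^ (n - m))"
    by (intro sum_mono term_bound) auto
  also have "\<dots> = 2 / (1 - 2 * lam0) ^ 2 * acoef lam n * (\<Sum>m<n. q ^ (n - m))"
    by (simp add: sum_distrib_left)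
  also have "\<dots> \<le> 2 / (1 - 2 * lam0) ^ 2 * acoef lam n * (1 / (1 - q))"
  proof -
    have "q / (1 - q) \<le> 1 / (1 - q)" using q_bounds by (intro divide_right_mono) auto
    then show ?thesis using geo_sum[of n] e an by (intro mult_left_mono) auto
  qed
  finally have s2: "(\<Sum>m<n. (1 / 4 ^ m) * (2 * s n / dl m ^ 2)) \<le> 2 / (1 - 2 * lam0) ^ 2 * acoef lam n * (1 / (1 - q))" .
  have "B0 * acoef lam n = acoef lam n / (1 - 2 * lam0) + 2 / (1 - 2 * lam0) ^ 2 * acoef lam n * (1 / (1 - q))"
    unfolding B0_def by (simp add: field_simps)
  then show ?thesis using int_h t1 s2 by linarith
qed

definition c :: complex where "c = integral\<^sup>L M (f n x)"

lemma D_bound: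
  assumes N: "N = n \<or> N = Suc n" and w: "w \<in> Sq N d"
  shows "cmod (integral\<^sup>L M (f N w) - c) \<le> B0 * acoef lam n"
proof -
  have Nle: "N \<le> Suc n" using N by auto
  have i1: "integrable M (f N w)" using f_integrable[OF Nle w] .
  have i2: "integrable M (f n x)" using f_integrable[of n x] xm[of n] by auto
  have "integral\<^sup>L M (f N w) - c = (\<integral>y. f N w y - f n x y \<partial>M)"
    unfolding c_def using i1 i2 by (simp add: Bochner_Integration.integral_diff)
  also have "cmod \<dots> \<le> integral\<^sup>L M h"
    using i1 i2 h_integrable pointwise[OF N w]
    by (intro Bochner_Integration.integral_norm_bound_integral) auto
  finally show ?thesis using int_h_bound by linarith
qed

lemma Tn_eq: assumes N: "N \<le> Suc n" and z: "z \<in> Sq N d" shows "Tn lam M N z = integral\<^sup>L M (f N z)"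
proof -
  have "f N z = (\<lambda>y. indicator (Kset lam - Sq N d) y *\<^sub>R (1 / (z - y)))" by (rule ext) (simp add: f_def)
  then show ?thesis using Qn_eq[OF cvN[OF N] z] by (simp add: Tn_def set_lebesgue_integral_def)
qed

lemma E_bound:
  assumes N: "N = n \<or> N = Suc n"
  shows "cmod (Sn lam M N x - c) \<le> B0 * acoef lam n"
proof -
  have Nle: "N \<le> Suc n" using N by auto
  define Q where "Q = Sq N d"
  define g where "g z = integral\<^sup>L M (f N z)" for z
  define B where "B = B0 * acoef lam n"
  have QN: "Qn lam N x = Q" unfolding Q_def using Qn_eq[OF cvN[OF Nle] xm[OF Nle]] .
  have mu: "measure M Q = 1 / 4 ^ N" unfolding Q_def using meas_Sq[OF cvN[OF Nle]] .
  have mupos: "measure M Q > 0" using mu by simp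
  have gb: "cmod (g z - c) \<le> B" if "z \<in> Q" for z
    using D_bound[OF N, of z] that by (simp add: g_def Q_def B_def)
  have Bnn: "0 \<le> B" using gb[of x] xm[OF Nle] by (auto simp: Q_def intro: order_trans[OF norm_ge_zero])
  have gm: "g \<in> borel_measurable M"
    unfolding g_def f_def by (rule g_meas) simp
  have ig: "integrable M (\<lambda>z. indicator Q z *\<^sub>R g z)"
  proof (rule integrable_const_bound[where B="cmod c + B"])
    show "(\<lambda>z. indicator Q z *\<^sub>R g z) \<in> borel_measurable M" using gm unfolding Q_def by measurable
    show "AE z in M. cmod (indicator Q z *\<^sub>R g z) \<le> cmod c + B"
    proof (rule AE_I2)
      fix z show "cmod (indicator Q z *\<^sub>R g z) \<le> cmod c + B"
      proof (cases "z \<in> Q")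
        case True
        have "cmod (g z) \<le> cmod c + cmod (g z - c)" by (metis norm_triangle_sub add.commute)
        then show ?thesis using gb[OF True] True by simp
      next
        case False then show ?thesis using Bnn by simp
      qed
    qed
  qed
  have ic: "integrable M (\<lambda>z. indicator Q z *\<^sub>R c)"
    by (intro integrable_scaleR_left integrable_real_indicator) (auto simp: Q_def less_top[symmetric])
  have idiff: "integrable M (\<lambda>z. indicator Q z *\<^sub>R (g z - c))"
    using Bochner_Integration.integrable_diff[OF ig ic] by (simp add: scaleR_diff_right)
  have setint: "set_lebesgue_integral M Q (Tn lam M N) = (\<integral>z. indicator Q z *\<^sub>R g z \<partial>M)"
    unfolding set_lebesgue_integral_def
    by (intro Bochner_Integration.integral_cong refl) (auto simp: indicator_def Tn_eq[OF Nle] g_def Q_def)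
  have "(\<integral>z. indicator Q z *\<^sub>R g z \<partial>M) = (\<integral>z. indicator Q z *\<^sub>R (g z - c) \<partial>M) + (\<integral>z. indicator Q z *\<^sub>R c \<partial>M)"
    using Bochner_Integration.integral_add[OF idiff ic] by (simp add: scaleR_diff_right)
  also have "(\<integral>z. indicator Q z *\<^sub>R c \<partial>M) = measure M Q *\<^sub>R c"
    by (subst integral_scaleR_left) (auto simp: Q_def less_top[symmetric])
  finally have split: "(\<integral>z. indicator Q z *\<^sub>R g z \<partial>M) = (\<integral>z. indicator Q z *\<^sub>R (g z - c) \<partial>M) + measure M Q *\<^sub>R c" .
  have nb: "cmod (\<integral>z. indicator Q z *\<^sub>R (g z - c) \<partial>M) \<le> (\<integral>z. indicator Q z * B \<partial>M)"
  proof (rule Bochner_Integration.integral_norm_bound_integral[OF idiff])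
    show "integrable M (\<lambda>z. indicator Q z * B)"
      by (intro integrable_mult_left integrable_real_indicator) (auto simp: Q_def less_top[symmetric])
    fix z show "cmod (indicator Q z *\<^sub>R (g z - c)) \<le> indicator Q z * B"
      using gb Bnn by (cases "z \<in> Q") auto
  qed
  also have "(\<integral>z. indicator Q z * B \<partial>M) = measure M Q * B" by (simp add: Q_def)
  finally have nb2: "cmod (\<integral>z. indicator Q z *\<^sub>R (g z - c) \<partial>M) \<le> measure M Q * B" .
  have "Sn lam M N x - c = (\<integral>z. indicator Q z *\<^sub>R (g z - c) \<partial>M) / complex_of_real (measure M Q)"
    unfolding Sn_def QN setint split using mupos
    by (simp add: field_simps scaleR_conv_of_real)
  then have "cmod (Sn lam M N x - c) = cmod (\<integral>z. indicator Q z *\<^sub>R (g z - c) \<partial>M) / measure M Q"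
    using mupos by (simp add: norm_divide)
  also have "\<dots> \<le> B" using nb2 mupos by (simp add: divide_le_eq mult.commute)
  finally show ?thesis by (simp add: B_def)
qed

lemma final: "cmod (Sn lam M (Suc n) x - Sn lam M n x) \<le> 2 * B0 * acoef lam n"
proof -
  have "cmod (Sn lam M (Suc n) x - Sn lam M n x) \<le> cmod (Sn lam M (Suc n) x - c) + cmod (Sn lam M n x - c)"
    using norm_triangle_ineq4[of "Sn lam M (Suc n) x - c" "Sn lam M n x - c"] by simp
  then show ?thesis using E_bound[of "Suc n"] E_bound[of n] by simp
qed

end

definition Bc :: "real \<Rightarrow> real" where
  "Bc l = 1 / (1 - 2 * l) + 2 / ((1 - 2 * l) ^ 2 * (1 - 4 * l ^ 2))"

lemma (in pt) B0_eq: "B0 = Bc lam0" by (simp add: B0_def Bc_def q_def)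

theorem lemma2p2:
  fixes lam0 :: real
  assumes "1/4 \<le> lam0" and "lam0 < 1/2"
  shows "\<exists>C>0. \<forall>(lam :: nat \<Rightarrow> real) (M :: complex measure).
           (\<forall>k\<ge>1. 1/4 \<le> lam k \<and> lam k \<le> lam0) \<longrightarrow> cantor_measure lam M \<longrightarrow>
           (\<forall>n x. x \<in> Kset lam \<longrightarrow>
              cmod (Sn lam M (Suc n) x - Sn lam M n x) \<le> C * acoef lam n)"
proof (intro exI[of _ "2 * Bc lam0"] conjI allI impI)
  have e: "1 - 2 * lam0 > 0" using assms by simp
  have "lam0 * lam0 < (1/2) * (1/2)" using assms by (intro mult_strict_mono) auto
  then have q: "1 - 4 * lam0 ^ 2 > 0" by (simp add: power2_eq_square)
  show "0 < 2 * Bc lam0" unfolding Bc_def using e q by (intro mult_pos_pos add_pos_pos divide_pos_pos) auto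
next
  fix lam :: "nat \<Rightarrow> real" and M :: "complex measure" and n x
  assume l: "\<forall>k\<ge>1. 1/4 \<le> lam k \<and> lam k \<le> lam0" and cm: "cantor_measure lam M"
    and xK: "x \<in> Kset lam"
  interpret cset lam lam0 using l assms by unfold_locales auto
  obtain d where d: "cv (Suc n) d" "x \<in> Sq (Suc n) d" using K_mem[OF xK] by blast
  interpret pt lam lam0 M x n d using cm xK d by unfold_locales auto
  show "cmod (Sn lam M (Suc n) x - Sn lam M n x) \<le> 2 * Bc lam0 * acoef lam n"
    using final B0_eq by simp
qed

end
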